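(* Let an FCA with state set $S$, neighborhood $m=l+1+r$, local rule $f$ and boundary type $b\in\{\text{null},\text{periodic}\}$ be given, let $G$ be its reversibility graph and $\mathrm{CG}$ its circuit graph. Let $N$ be a negative vertex of $G$ with value $k\ge1$, let $C_1,\dots,C_t$ be distinct circuits of $G$ with lengths $r_1,\dots,r_t$, and let $x_1,\dots,x_t\ge 0$ be integers such that for every $j$ with $x_j>0$ there is a path in $\mathrm{CG}$ from $C_j$ to $N$ all of whose vertices other than $N$ are circuits $C_{j'}$ with $x_{j'}>0$. Then the FCA is not $(k+x_1r_1+\dots+x_tr_t)$-cell-reversible.
   Context: A one-dimensional finite cellular automaton (FCA) is given by a state set $S=\{0,1,\dots,s-1\}$, integers $l,r\ge 0$ with neighborhood size $m=l+1+r\ge 2$, a local rule $f:S^m\to S$, and a boundary type $b\in\{\text{null},\text{periodic}\}$. For $n\ge 1$ the global map $\tau_n:S^n\to S^n$ sends $(x_0,\dots,x_{n-1})$ to $(y_0,\dots,y_{n-1})$ with $y_i=f(x_{i-l},\dots,x_{i+r})$, where for the null boundary $x_j=0$ whenever $j<0$ or $j>n-1$, and for the periodic boundary indices are taken modulo $n$. The FCA is $n$-cell-reversible if $\tau_n$ is a bijection (equivalently, since $S^n$ is finite, surjective). Reversibility graph (RG). Null boundary: vertices are subsets of $S^{m-1}$; the root is $N_0=\{(a_1,\dots,a_{m-1})\in S^{m-1}: a_1=\dots=a_l=0\}$; the acceptance set is $R=\{(a_1,\dots,a_{m-1})\in S^{m-1}: a_{m-r}=\dots=a_{m-1}=0\}$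 (so $R=S^{m-1}$ if $r=0$); for a subset $N$ and $c\in S$, $\delta(N,c)=\{(a_1,\dots,a_{m-1})\in S^{m-1}:\exists a_0\in S,\ (a_0,\dots,a_{m-2})\in N,\ f(a_0,a_1,\dots,a_{m-1})=c\}$. Periodic boundary: vertices are subsets of $S^{m-1}\times S^{m-1}$; the root and the acceptance set are $N_0=R=\{(a,a):a\in S^{m-1}\}$; $\delta(N,c)=\{((a_1,\dots,a_{m-1}),(b_1,\dots,b_{m-1})):\exists b_0\in S,\ ((a_1,\dots,a_{m-1}),(b_0,\dots,b_{m-2}))\in N,\ f(b_0,\dots,b_{m-1})=c\}$. In both cases the RG is the directed graph whose vertex set consists of all subsets obtainable from $N_0$ by repeatedly applying $\delta$ (including $N_0$; equal subsets are the same vertex; the empty set may occur), with, for each vertex $N$ and each $c\in S$, an edge labelled $c$ from $N$ to $\delta(N,c)$. The value of a vertex $N$ is the length of a shortest directed path from $N_0$ to $N$. A vertex $N$ is negative if $N\cap R=\emptyset$. A circuit is an elementary directed cycle of the RG (a closed directed path with no repeated vertex other than its start = end; a loop is a circuit of length $1$); its length is its number of edges, and it passes through $N$ if $N$ is one of its vertices. Circuit graph (CG): the undirected graph whose vertices are all negative vertices and all circuits of the RG; two circuits are joined by an edge if they have at least one RG-vertex in common; a circuit $D$ and a negative vertex $N$ are joined by an edge if $D$ passes through $N$; there are no other edges. *)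

theory Defs
  imports Main
begin

datatype boundary = Null | Periodic

definition tuples :: "nat \<Rightarrow> nat \<Rightarrow> nat list set" where
  "tuples s k = {a. length a = k \<and> (\<forall>c\<in>set a. c < s)}"

definition is_fca :: "nat \<Rightarrow> nat \<Rightarrow> nat \<Rightarrow> (nat list \<Rightarrow> nat) \<Rightarrow> bool" where
  "is_fca s l r f \<longleftrightarrow> l + 1 + r \<ge> 2 \<and> (\<forall>w\<in>tuples s (l + 1 + r). f w < s)"

definition cell :: "boundary \<Rightarrow> nat \<Rightarrow> nat list \<Rightarrow> int \<Rightarrow> nat" where
  "cell b n xs k = (case b of
      Null \<Rightarrow> (if 0 \<le> k \<and> k < int n then xs ! nat k else 0)
    | Periodic \<Rightarrow> xs ! nat (k mod int n))"

definition tau :: "boundary \<Rightarrow> nat \<Rightarrow> nat \<Rightarrow> (nat list \<Rightarrow> nat) \<Rightarrow> nat \<Rightarrow> nat list \<Rightarrow> nat list" where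
  "tau b l r f n xs =
     map (\<lambda>i. f (map (\<lambda>j. cell b n xs (int i + int j - int l)) [0..<l + 1 + r])) [0..<n]"

definition cell_reversible :: "boundary \<Rightarrow> nat \<Rightarrow> nat \<Rightarrow> nat \<Rightarrow> (nat list \<Rightarrow> nat) \<Rightarrow> nat \<Rightarrow> bool" where
  "cell_reversible b s l r f n \<longleftrightarrow> bij_betw (tau b l r f n) (tuples s n) (tuples s n)"

text \<open>Elements of RG vertices: a (m-1)-tuple for the null boundary, a pair of
  (m-1)-tuples for the periodic boundary.\<close>
datatype rgelem = NElem "nat list" | PElem "nat list" "nat list"

definition rg_root :: "boundary \<Rightarrow> nat \<Rightarrow> nat \<Rightarrow> nat \<Rightarrow> rgelem set" where
  "rg_root b s l r = (case b of
      Null \<Rightarrow> {NElem a | a. a \<in> tuples s (l + r) \<and> take l a = replicate l 0}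
    | Periodic \<Rightarrow> {PElem a a | a. a \<in> tuples s (l + r)})"

definition rg_acc :: "boundary \<Rightarrow> nat \<Rightarrow> nat \<Rightarrow> nat \<Rightarrow> rgelem set" where
  "rg_acc b s l r = (case b of
      Null \<Rightarrow> {NElem a | a. a \<in> tuples s (l + r) \<and> drop l a = replicate r 0}
    | Periodic \<Rightarrow> {PElem a a | a. a \<in> tuples s (l + r)})"

definition rg_delta :: "boundary \<Rightarrow> nat \<Rightarrow> nat \<Rightarrow> nat \<Rightarrow> (nat list \<Rightarrow> nat) \<Rightarrow> rgelem set \<Rightarrow> nat \<Rightarrow> rgelem set" where
  "rg_delta b s l r f N c = (case b of
      Null \<Rightarrow> {NElem a | a. a \<in> tuples s (l + r) \<and>
                 (\<exists>a0<s. NElem (a0 # butlast a) \<in> N \<and> f (a0 # a) = c)}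
    | Periodic \<Rightarrow> {PElem a bb | a bb. a \<in> tuples s (l + r) \<and> bb \<in> tuples s (l + r) \<and>
                 (\<exists>b0<s. PElem a (b0 # butlast bb) \<in> N \<and> f (b0 # bb) = c)})"

inductive_set reach :: "('v \<Rightarrow> nat \<Rightarrow> 'v) \<Rightarrow> 'v \<Rightarrow> nat \<Rightarrow> 'v set"
  for delta N0 s where
  root: "N0 \<in> reach delta N0 s"
| step: "N \<in> reach delta N0 s \<Longrightarrow> c < s \<Longrightarrow> delta N c \<in> reach delta N0 s"

definition edge :: "('v \<Rightarrow> nat \<Rightarrow> 'v) \<Rightarrow> nat \<Rightarrow> 'v \<Rightarrow> 'v \<Rightarrow> bool" where
  "edge delta s N N' \<longleftrightarrow> (\<exists>c<s. delta N c = N')"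

definition vvalue :: "('v \<Rightarrow> nat \<Rightarrow> 'v) \<Rightarrow> 'v \<Rightarrow> nat \<Rightarrow> 'v \<Rightarrow> nat" where
  "vvalue delta N0 s N =
     (LEAST k. \<exists>w. length w = k \<and> (\<forall>c\<in>set w. c < s) \<and> foldl delta N0 w = N)"

definition is_circuit :: "('v \<Rightarrow> nat \<Rightarrow> 'v) \<Rightarrow> 'v \<Rightarrow> nat \<Rightarrow> 'v list \<Rightarrow> bool" where
  "is_circuit delta N0 s vs \<longleftrightarrow> vs \<noteq> [] \<and> distinct vs \<and> set vs \<subseteq> reach delta N0 s \<and>
     (\<forall>i<length vs. edge delta s (vs ! i) (vs ! ((i + 1) mod length vs)))"

definition same_circuit :: "'v list \<Rightarrow> 'v list \<Rightarrow> bool" where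
  "same_circuit C D \<longleftrightarrow> (\<exists>q. rotate q C = D)"

end

theory Submission
  imports Defs
begin


definition lab :: "nat \<Rightarrow> nat list \<Rightarrow> bool" where
  "lab s w \<longleftrightarrow> (\<forall>c\<in>set w. c < s)"

definition vis :: "('v \<Rightarrow> nat \<Rightarrow> 'v) \<Rightarrow> 'v \<Rightarrow> nat list \<Rightarrow> 'v set" where
  "vis delta v w = (\<lambda>i. foldl delta v (take i w)) ` {0..length w}"

lemma reach_word:
  assumes "N \<in> reach delta N0 s"
  shows "\<exists>w. lab s w \<and> foldl delta N0 w = N"
  using assms
proof induction
  case root
  then show ?case by (intro exI[of _ "[]"]) (simp add: lab_def)
next
  case (step N c)
  then obtain w where "lab s w" "foldl delta N0 w = N" by blast
  then show ?case using step by (intro exI[of _ "w @ [c]"]) (auto simp: lab_def)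
qed

lemma circuit_walk_aux:
  assumes "is_circuit delta N0 s vs" "i < length vs"
  shows "\<exists>w. length w = d \<and> lab s w \<and> (\<forall>e\<le>d. foldl delta (vs!i) (take e w) = vs ! ((i+e) mod length vs))"
proof (induction d)
  case 0
  then show ?case using assms by (intro exI[of _ "[]"]) (simp add: lab_def)
next
  case (Suc d)
  then obtain w where w: "length w = d" "lab s w" "\<forall>e\<le>d. foldl delta (vs!i) (take e w) = vs ! ((i+e) mod length vs)" by blast
  let ?p = "length vs"
  have "(i+d) mod ?p < ?p" using assms(2) by (rule mod_less_divisor[OF le_less_trans[OF le0]])
  then obtain c where c: "c < s" "delta (vs ! ((i+d) mod ?p)) c = vs ! (((i+d) mod ?p + 1) mod ?p)"
    using assms(1) unfolding is_circuit_def edge_def by blast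
  have c2: "delta (vs ! ((i+d) mod ?p)) c = vs ! ((i + Suc d) mod ?p)"
    using c(2) by (simp add: mod_Suc_eq)
  show ?case
  proof (intro exI[of _ "w @ [c]"] conjI allI impI)
    show "length (w @ [c]) = Suc d" using w by simp
    show "lab s (w @ [c])" using w c by (simp add: lab_def)
    fix e assume e: "e \<le> Suc d"
    show "foldl delta (vs!i) (take e (w @ [c])) = vs ! ((i+e) mod ?p)"
    proof (cases "e \<le> d")
      case True
      then show ?thesis using w by simp
    next
      case False
      then have "e = Suc d" using e by simp
      then show ?thesis using w(1) w(3)[rule_format, of d] c2 by simp
    qed
  qed
qed

lemma circuit_walk:
  assumes "is_circuit delta N0 s vs" "u \<in> set vs"
  shows "\<exists>w. length w = length vs \<and> lab s w \<and> foldl delta u w = u \<and> set vs \<subseteq> vis delta u w"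
proof -
  obtain i where i: "i < length vs" "vs ! i = u" using assms(2) by (auto simp: in_set_conv_nth)
  obtain w where w: "length w = length vs" "lab s w" "\<forall>e\<le>length vs. foldl delta (vs!i) (take e w) = vs ! ((i+e) mod length vs)"
    using circuit_walk_aux[OF assms(1) i(1)] by blast
  have "foldl delta u w = u" using w(3)[rule_format, of "length vs"] w(1) i by simp
  moreover have "set vs \<subseteq> vis delta u w"
  proof
    fix v assume "v \<in> set vs"
    then obtain q where q: "q < length vs" "vs ! q = v" by (auto simp: in_set_conv_nth)
    define e where "e = (q + length vs - i) mod length vs"
    have pos: "0 < length vs" using i(1) by linarith
    have e1: "e \<le> length vs" unfolding e_def using pos by (simp add: less_imp_le)
    have "(i + e) mod length vs = (i + (q + length vs - i)) mod length vs"
      unfolding e_def by (simp add: mod_add_right_eq)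
    also have "\<dots> = q" using i q by simp
    finally have "foldl delta u (take e w) = v" using w(3)[rule_format, OF e1] i q by simp
    then show "v \<in> vis delta u w" unfolding vis_def using e1 w(1) by force
  qed
  ultimately show ?thesis using w by blast
qed

lemma insert_walk:
  assumes "foldl delta N w = N" "lab s w" "i \<le> length w" "foldl delta N (take i w) = u"
    "foldl delta u c = u" "lab s c"
  shows "foldl delta N (take i w @ c @ drop i w) = N \<and> lab s (take i w @ c @ drop i w)
     \<and> vis delta N w \<union> vis delta u c \<subseteq> vis delta N (take i w @ c @ drop i w)"
proof (intro conjI)
  let ?w = "take i w @ c @ drop i w"
  have "foldl delta u (drop i w) = N"
    using assms(1,4) by (metis append_take_drop_id foldl_append)
  then show "foldl delta N ?w = N" using assms(4,5) by simp
  show "lab s ?w" using assms(2,6) unfolding lab_def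
    by (auto dest: in_set_takeD in_set_dropD)
  have li: "length (take i w) = i" using assms(3) by simp
  show "vis delta N w \<union> vis delta u c \<subseteq> vis delta N ?w"
  proof
    fix v assume "v \<in> vis delta N w \<union> vis delta u c"
    then show "v \<in> vis delta N ?w"
    proof
      assume "v \<in> vis delta N w"
      then obtain e where e: "e \<le> length w" "v = foldl delta N (take e w)" unfolding vis_def by auto
      show ?thesis
      proof (cases "e \<le> i")
        case True
        have "take e ?w = take e w" using True li by (simp add: min_absorb1)
        then show ?thesis unfolding vis_def using e True assms(3)
          by (intro image_eqI[of _ _ e]) auto
      next
        case False
        have "take (e + length c) ?w = take i w @ c @ take (e - i) (drop i w)"
          using False li by simp
        moreover have "foldl delta N (take i w @ c @ take (e - i) (drop i w)) = v"
        proof -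
          have "take e w = take i w @ take (e - i) (drop i w)"
            using False by (metis le_add_diff_inverse nat_le_linear take_add)
          then show ?thesis using e assms(4,5) by simp
        qed
        ultimately show ?thesis unfolding vis_def using e
          by (intro image_eqI[of _ _ "e + length c"]) auto
      qed
    next
      assume "v \<in> vis delta u c"
      then obtain e where e: "e \<le> length c" "v = foldl delta u (take e c)" unfolding vis_def by auto
      have "take (i + e) ?w = take i w @ take e c" using li e by simp
      then show ?thesis unfolding vis_def using e assms(3,4)
        by (intro image_eqI[of _ _ "i + e"]) auto
    qed
  qed
qed

lemma insert_many:
  assumes "foldl delta N w = N" "lab s w" "u \<in> vis delta N w"
    "foldl delta u c = u" "lab s c"
  shows "\<exists>w'. length w' = length w + m * length c \<and> foldl delta N w' = N \<and> lab s w'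
     \<and> vis delta N w \<subseteq> vis delta N w' \<and> (m > 0 \<longrightarrow> vis delta u c \<subseteq> vis delta N w')"
proof (induction m)
  case 0
  then show ?case using assms by (intro exI[of _ w]) auto
next
  case (Suc m)
  then obtain w'' where w'': "length w'' = length w + m * length c" "foldl delta N w'' = N" "lab s w''"
     "vis delta N w \<subseteq> vis delta N w''" "(m > 0 \<longrightarrow> vis delta u c \<subseteq> vis delta N w'')" by blast
  have "u \<in> vis delta N w''" using w''(4) assms(3) by blast
  then obtain i where i: "i \<le> length w''" "foldl delta N (take i w'') = u" unfolding vis_def by auto
  note r = insert_walk[OF w''(2,3) i(1,2) assms(4,5)]
  show ?case
    apply (intro exI[of _ "take i w'' @ c @ drop i w''"])
    using r w'' i by auto
qed

definition VV :: "'v \<Rightarrow> (nat \<Rightarrow> 'v list) \<Rightarrow> nat set \<Rightarrow> 'v set" where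
  "VV N C K = insert N (\<Union>j\<in>K. set (C j))"

definition Pgood where
  "Pgood delta s N C x K \<longleftrightarrow> (\<exists>w. length w = (\<Sum>j\<in>K. x j * length (C j)) \<and> lab s w \<and>
      foldl delta N w = N \<and> VV N C K \<subseteq> vis delta N w)"

lemma Pgood_empty: "Pgood delta s N C x {}"
  unfolding Pgood_def VV_def vis_def by (intro exI[of _ "[]"]) (auto simp: lab_def)

lemma Pgood_insert:
  assumes "finite K" "j \<notin> K" "x j > 0" "is_circuit delta N0 s (C j)"
    "set (C j) \<inter> VV N C K \<noteq> {}" "Pgood delta s N C x K"
  shows "Pgood delta s N C x (insert j K)"
proof -
  obtain w where w: "length w = (\<Sum>j\<in>K. x j * length (C j))" "lab s w"
      "foldl delta N w = N" "VV N C K \<subseteq> vis delta N w"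
    using assms(6) unfolding Pgood_def by blast
  obtain u where u: "u \<in> set (C j)" "u \<in> VV N C K" using assms(5) by blast
  obtain c where c: "length c = length (C j)" "lab s c" "foldl delta u c = u" "set (C j) \<subseteq> vis delta u c"
    using circuit_walk[OF assms(4) u(1)] by blast
  obtain w' where w': "length w' = length w + x j * length c" "foldl delta N w' = N" "lab s w'"
     "vis delta N w \<subseteq> vis delta N w'" "vis delta u c \<subseteq> vis delta N w'"
    using insert_many[OF w(3,2) _ c(3,2), of "x j"] u(2) w(4) assms(3) by blast
  have "VV N C (insert j K) = VV N C K \<union> set (C j)" unfolding VV_def by auto
  then show ?thesis unfolding Pgood_def using w w' c assms(1,2)
    by (intro exI[of _ w']) auto
qed

definition PP :: "nat \<Rightarrow> (nat \<Rightarrow> nat) \<Rightarrow> (nat \<Rightarrow> 'v list) \<Rightarrow> 'v \<Rightarrow> nat list \<Rightarrow> bool" where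
  "PP t x C N p \<longleftrightarrow> p \<noteq> [] \<and> (\<forall>i\<in>set p. i < t \<and> x i > 0) \<and>
             (\<forall>i. i + 1 < length p \<longrightarrow> set (C (p ! i)) \<inter> set (C (p ! (i + 1))) \<noteq> {}) \<and>
             N \<in> set (C (last p))"

definition Lay where
  "Lay t x C N d = {j. \<exists>p. PP t x C N p \<and> hd p = j \<and> length p \<le> d}"

lemma Lay_sub: "Lay t x C N d \<subseteq> {j. j < t \<and> x j > 0}"
  unfolding Lay_def PP_def by auto

lemma Lay_mono: "d \<le> d' \<Longrightarrow> Lay t x C N d \<subseteq> Lay t x C N d'"
  unfolding Lay_def by force

lemma Lay_step:
  assumes "j \<in> Lay t x C N (Suc d)"
  shows "set (C j) \<inter> VV N C (Lay t x C N d) \<noteq> {}"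
proof -
  obtain p where p: "PP t x C N p" "hd p = j" "length p \<le> Suc d" using assms unfolding Lay_def by blast
  show ?thesis
  proof (cases "length p = 1")
    case True
    then have "p = [j]" using p(2) by (cases p) auto
    then have "N \<in> set (C j)" using p(1) unfolding PP_def by simp
    then show ?thesis unfolding VV_def by blast
  next
    case False
    then obtain q where pq: "p = j # q" "q \<noteq> []" using p(1,2) unfolding PP_def
      by (cases p) auto
    have "PP t x C N q" using p(1) pq unfolding PP_def
    proof (intro conjI allI impI)
      fix i assume a: "i + 1 < length q"
      have "\<forall>i. i + 1 < length p \<longrightarrow> set (C (p ! i)) \<inter> set (C (p ! (i + 1))) \<noteq> {}"
        using p(1) unfolding PP_def by blast
      moreover have "Suc i + 1 < length p" using a pq by simp
      ultimately have "set (C (p ! (Suc i))) \<inter> set (C (p ! (Suc i + 1))) \<noteq> {}"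
        by blast
      then show "set (C (q ! i)) \<inter> set (C (q ! (i + 1))) \<noteq> {}" using pq by simp
    qed (auto simp: PP_def)
    then have "hd q \<in> Lay t x C N d" unfolding Lay_def using p(3) pq by auto
    moreover have "set (C j) \<inter> set (C (hd q)) \<noteq> {}"
    proof -
      have h: "\<forall>i. i + 1 < length p \<longrightarrow> set (C (p ! i)) \<inter> set (C (p ! (i + 1))) \<noteq> {}"
        using p(1) unfolding PP_def by blast
      have "0 + 1 < length p" using pq by simp
      with h have "set (C (p ! 0)) \<inter> set (C (p ! (0 + 1))) \<noteq> {}" by blast
      then show ?thesis using pq by (simp add: hd_conv_nth)
    qed
    ultimately show ?thesis unfolding VV_def by blast
  qed
qed

lemma Pgood_Lay:
  assumes circ: "\<forall>j<t. is_circuit delta N0 s (C j)"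
  shows "Pgood delta s N C x (Lay t x C N d)"
proof (induction d)
  case 0
  have "Lay t x C N 0 = {}" unfolding Lay_def PP_def by auto
  then show ?case using Pgood_empty by simp
next
  case (Suc d)
  let ?L = "Lay t x C N d" and ?L' = "Lay t x C N (Suc d)"
  have fin0: "finite (Lay t x C N e)" for e
    by (rule finite_subset[OF Lay_sub]) simp
  have fin: "finite ?L'" "finite ?L" using fin0 by auto
  have "?L' - ?L \<subseteq> ?L' - ?L" by simp
  have "Pgood delta s N C x (?L \<union> F)" if "F \<subseteq> ?L' - ?L" for F
  proof -
    have "finite F" using that fin by (auto intro: finite_subset)
    then show ?thesis using that
    proof (induction F rule: finite_subset_induct)
      case empty
      then show ?case using Suc by simp
    next
      case (insert a F)
      have "set (C a) \<inter> VV N C ?L \<noteq> {}" using Lay_step[of a t x C N d] insert(2) by blast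
      moreover have "VV N C ?L \<subseteq> VV N C (?L \<union> F)" unfolding VV_def by auto
      ultimately have "set (C a) \<inter> VV N C (?L \<union> F) \<noteq> {}" by blast
      moreover have "a < t" "x a > 0" using insert(2) Lay_sub[of t x C N "Suc d"] by auto
      ultimately have "Pgood delta s N C x (insert a (?L \<union> F))"
        using Pgood_insert[of "?L \<union> F" a x delta N0 s C N] insert circ fin by auto
      then show ?case by simp
    qed
  qed
  moreover have "?L \<union> (?L' - ?L) = ?L'" using Lay_mono[of d "Suc d" t x C N] by auto
  ultimately show ?case by (metis order_refl)
qed



definition win :: "(nat \<Rightarrow> nat) \<Rightarrow> nat \<Rightarrow> nat \<Rightarrow> nat list" where
  "win g i L = map (\<lambda>j. g (i+j)) [0..<L]"

lemma win_snoc: "win g i (Suc L) = win g i L @ [g (i+L)]"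
  unfolding win_def by simp

lemma win_cons: "win g i (Suc L) = g i # win g (Suc i) L"
  by (induction L) (simp_all add: win_def)

lemma win_len[simp]: "length (win g i L) = L" by (simp add: win_def)

lemma win_nth: "j < L \<Longrightarrow> win g i L ! j = g (i + j)" by (simp add: win_def)

lemma win_tuples: "(\<And>j. g j < s) \<Longrightarrow> win g i L \<in> tuples s L"
  unfolding tuples_def win_def by auto

lemma delta_null: "b = Null \<Longrightarrow> a \<in> tuples s (l+r) \<Longrightarrow> a0 < s \<Longrightarrow> NElem (a0 # butlast a) \<in> P
   \<Longrightarrow> f (a0 # a) = c \<Longrightarrow> NElem a \<in> rg_delta b s l r f P c"
  unfolding rg_delta_def by auto

lemma delta_per: "b = Periodic \<Longrightarrow> a \<in> tuples s (l+r) \<Longrightarrow> bb \<in> tuples s (l+r) \<Longrightarrow> a0 < s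
   \<Longrightarrow> PElem a (a0 # butlast bb) \<in> P
   \<Longrightarrow> f (a0 # bb) = c \<Longrightarrow> PElem a bb \<in> rg_delta b s l r f P c"
  unfolding rg_delta_def by auto

lemma sound:
  assumes xs: "xs \<in> tuples s n" and n: "n \<ge> 1" and s: "0 < s" and lr: "l + r \<ge> 1"
  shows "foldl (rg_delta b s l r f) (rg_root b s l r) (tau b l r f n xs) \<inter> rg_acc b s l r \<noteq> {}"
proof -
  define z where "z j = cell b n xs (int j - int l)" for j
  have lenxs: "length xs = n" and xss: "\<forall>c\<in>set xs. c < s" using xs by (auto simp: tuples_def)
  have zlt: "z j < s" for j
  proof (cases b)
    case Null
    then show ?thesis using xss s lenxs unfolding z_def cell_def
      by (auto intro!: xss[rule_format] nth_mem)
  next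
    case Periodic
    have "nat ((int j - int l) mod int n) < n" using n by (simp add: nat_less_iff)
    then show ?thesis using Periodic xss lenxs unfolding z_def cell_def
      by (auto intro!: xss[rule_format] nth_mem)
  qed
  obtain L where L: "l + r = Suc L" using lr by (cases "l + r") auto
  define y where "y = tau b l r f n xs"
  have leny: "length y = n" by (simp add: y_def tau_def)
  have yi: "y ! i = f (win z i (Suc (l + r)))" if "i < n" for i
  proof -
    have "map (\<lambda>j. cell b n xs (int i + int j - int l)) [0..<l + 1 + r] = win z i (Suc (l + r))"
      unfolding win_def z_def by (simp add: algebra_simps)
    then show ?thesis using that by (simp add: y_def tau_def)
  qed
  define W where "W i = win z i (l + r)" for i
  define E where "E i = (case b of Null \<Rightarrow> NElem (W i) | Periodic \<Rightarrow> PElem (W 0) (W i))" for i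
  let ?d = "rg_delta b s l r f"
  have Wt: "W i \<in> tuples s (l + r)" for i unfolding W_def by (rule win_tuples[OF zlt])
  have Wstep: "z i # butlast (W (Suc i)) = W i" for i
    unfolding W_def L by (simp only: win_snoc[of z "Suc i"] butlast_snoc win_cons[of z i, symmetric])
  have Wf: "f (z i # W (Suc i)) = f (win z i (Suc (l + r)))" for i
    unfolding W_def by (simp add: win_cons)
  have main: "E i \<in> foldl ?d (rg_root b s l r) (take i y)" if "i \<le> n" for i
    using that
  proof (induction i)
    case 0
    show ?case
    proof (cases b)
      case Null
      have "take l (W 0) = replicate l 0"
      proof (rule nth_equalityI)
        show "length (take l (W 0)) = length (replicate l 0)" by (simp add: W_def)
        fix j assume "j < length (take l (W 0))"
        then have "j < l" by (simp add: W_def)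
        then show "take l (W 0) ! j = replicate l 0 ! j"
          using Null L by (simp add: W_def win_nth z_def cell_def)
      qed
      then show ?thesis using Null Wt by (simp add: E_def rg_root_def)
    next
      case Periodic
      then show ?thesis using Wt by (simp add: E_def rg_root_def)
    qed
  next
    case (Suc i)
    then have IH: "E i \<in> foldl ?d (rg_root b s l r) (take i y)" and i: "i < n" by auto
    have tk: "take (Suc i) y = take i y @ [y ! i]" using i leny by (simp add: take_Suc_conv_app_nth)
    let ?P = "foldl ?d (rg_root b s l r) (take i y)"
    have fy: "f (z i # W (Suc i)) = y ! i" using Wf yi[OF i] by simp
    show ?case
    proof (cases b)
      case Null
      have "NElem (z i # butlast (W (Suc i))) \<in> ?P" using IH Null Wstep by (simp add: E_def)
      then have "NElem (W (Suc i)) \<in> ?d ?P (y ! i)"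
        using delta_null[of b "W (Suc i)" s l r "z i" ?P f "y ! i"] Null Wt[of "Suc i"] zlt[of i] fy by blast
      then show ?thesis unfolding tk using Null by (simp add: E_def)
    next
      case Periodic
      have "PElem (W 0) (z i # butlast (W (Suc i))) \<in> ?P" using IH Periodic Wstep by (simp add: E_def)
      then have "PElem (W 0) (W (Suc i)) \<in> ?d ?P (y ! i)"
        using delta_per[of b "W 0" s l r "W (Suc i)" "z i" ?P f "y ! i"] Periodic Wt[of 0] Wt[of "Suc i"] zlt[of i] fy by blast
      then show ?thesis unfolding tk using Periodic by (simp add: E_def)
    qed
  qed
  have "E n \<in> rg_acc b s l r"
  proof (cases b)
    case Null
    have "drop l (W n) = replicate r 0"
    proof (rule nth_equalityI)
      show "length (drop l (W n)) = length (replicate r 0)" by (simp add: W_def)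
      fix j assume "j < length (drop l (W n))"
      then have "j < r" by (simp add: W_def)
      then show "drop l (W n) ! j = replicate r 0 ! j"
        using Null by (simp add: W_def win_nth z_def cell_def)
    qed
    then show ?thesis using Null Wt by (simp add: E_def rg_acc_def)
  next
    case Periodic
    have "W n = W 0"
    proof -
      have "z (n + j) = z j" for j
      proof -
        have "(int (n + j) - int l) mod int n = (int j - int l) mod int n"
          by (metis add_diff_eq mod_add_self1 of_nat_add)
        then show ?thesis using Periodic by (simp add: z_def cell_def)
      qed
      then show ?thesis unfolding W_def win_def by simp
    qed
    then show ?thesis using Periodic Wt by (simp add: E_def rg_acc_def)
  qed
  moreover have "E n \<in> foldl ?d (rg_root b s l r) y" using main[of n] leny by simp
  ultimately show ?thesis unfolding y_def by blast
qed


theorem theorem4: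
  fixes b :: boundary and s l r :: nat and f :: "nat list \<Rightarrow> nat"
    and N :: "rgelem set" and k t :: nat
    and C :: "nat \<Rightarrow> rgelem set list" and x :: "nat \<Rightarrow> nat"
  assumes fca: "is_fca s l r f"
    and N_vertex: "N \<in> reach (rg_delta b s l r f) (rg_root b s l r) s"
    and N_neg: "N \<inter> rg_acc b s l r = {}"
    and N_val: "vvalue (rg_delta b s l r f) (rg_root b s l r) s N = k"
    and k_pos: "k \<ge> 1"
    and C_circ: "\<forall>j<t. is_circuit (rg_delta b s l r f) (rg_root b s l r) s (C j)"
    and C_dist: "\<forall>i<t. \<forall>j<t. i \<noteq> j \<longrightarrow> \<not> same_circuit (C i) (C j)"
    and paths: "\<forall>j<t. x j > 0 \<longrightarrow>
        (\<exists>p. p \<noteq> [] \<and> hd p = j \<and> (\<forall>i\<in>set p. i < t \<and> x i > 0) \<and>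
             (\<forall>i. i + 1 < length p \<longrightarrow> set (C (p ! i)) \<inter> set (C (p ! (i + 1))) \<noteq> {}) \<and>
             N \<in> set (C (last p)))"
  shows "\<not> cell_reversible b s l r f (k + (\<Sum>j<t. x j * length (C j)))"
proof
  let ?d = "rg_delta b s l r f" and ?N0 = "rg_root b s l r"
  let ?n = "k + (\<Sum>j<t. x j * length (C j))"
  assume rev: "cell_reversible b s l r f ?n"
  obtain w0 where "lab s w0" "foldl ?d ?N0 w0 = N" using reach_word[OF N_vertex] by blast
  then have "\<exists>w. length w = length w0 \<and> (\<forall>c\<in>set w. c < s) \<and> foldl ?d ?N0 w = N"
    unfolding lab_def by blast
  then have "\<exists>w. length w = k \<and> (\<forall>c\<in>set w. c < s) \<and> foldl ?d ?N0 w = N"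
  proof -
    let ?P = "\<lambda>k. \<exists>w. length w = k \<and> (\<forall>c\<in>set w. c < s) \<and> foldl ?d ?N0 w = N"
    assume "?P (length w0)"
    then have "?P (LEAST k. ?P k)" by (rule LeastI)
    then show ?thesis using N_val unfolding vvalue_def by simp
  qed
  then obtain wk where wk: "length wk = k" "\<forall>c\<in>set wk. c < s" "foldl ?d ?N0 wk = N" by blast
  have s: "0 < s"
  proof -
    have "wk \<noteq> []" using wk(1) k_pos by auto
    then have "hd wk < s" using wk(2) by simp
    then show ?thesis by simp
  qed
  have lr: "l + r \<ge> 1" using fca unfolding is_fca_def by simp
  define A where "A = {j. j < t \<and> x j > 0}"
  have finA: "finite A" unfolding A_def by simp
  have "\<forall>j\<in>A. \<exists>d. j \<in> Lay t x C N d"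
  proof
    fix j assume "j \<in> A"
    then obtain p where "p \<noteq> [] \<and> hd p = j \<and> (\<forall>i\<in>set p. i < t \<and> x i > 0) \<and>
             (\<forall>i. i + 1 < length p \<longrightarrow> set (C (p ! i)) \<inter> set (C (p ! (i + 1))) \<noteq> {}) \<and>
             N \<in> set (C (last p))" using paths unfolding A_def by blast
    then have "j \<in> Lay t x C N (length p)" unfolding Lay_def PP_def by blast
    then show "\<exists>d. j \<in> Lay t x C N d" by blast
  qed
  then obtain dd where dd: "\<forall>j\<in>A. j \<in> Lay t x C N (dd j)" by metis
  define D where "D = (\<Sum>j\<in>A. dd j)"
  have "A \<subseteq> Lay t x C N D"
  proof
    fix j assume j: "j \<in> A"
    have "dd j \<le> D" unfolding D_def by (rule member_le_sum[OF j]) (simp_all add: finA)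
    then show "j \<in> Lay t x C N D" using dd j Lay_mono[of "dd j" D t x C N] by blast
  qed
  then have LA: "Lay t x C N D = A" using Lay_sub[of t x C N D] unfolding A_def by blast
  have "Pgood ?d s N C x A" using Pgood_Lay[OF C_circ, of N x D] LA by simp
  then obtain wc where wc: "length wc = (\<Sum>j\<in>A. x j * length (C j))" "lab s wc" "foldl ?d N wc = N"
    unfolding Pgood_def by blast
  have "(\<Sum>j<t. x j * length (C j)) = (\<Sum>j\<in>A. x j * length (C j))"
    by (rule sum.mono_neutral_right) (auto simp: A_def)
  then have lw: "length (wk @ wc) = ?n" using wk wc by simp
  have "wk @ wc \<in> tuples s ?n" using lw wk(2) wc(2) unfolding tuples_def lab_def by auto
  moreover have "tau b l r f ?n ` tuples s ?n = tuples s ?n"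
    using rev unfolding cell_reversible_def by (rule bij_betw_imp_surj_on)
  ultimately have "wk @ wc \<in> tau b l r f ?n ` tuples s ?n" by simp
  then obtain xs where xs: "xs \<in> tuples s ?n" "tau b l r f ?n xs = wk @ wc" by (auto simp del: tau_def)
  have "foldl ?d ?N0 (wk @ wc) = N" using wk(3) wc(3) by simp
  moreover have "foldl ?d ?N0 (tau b l r f ?n xs) \<inter> rg_acc b s l r \<noteq> {}"
    using sound[OF xs(1) _ s lr] k_pos by simp
  ultimately show False using N_neg xs(2) by simp
qed

end
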